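(* Let $S$ and $T$ be semigroups such that for all $\mathcal{R}$-incomparable elements $u,v\in T$ there exist $a,b\in S$ and a homomorphism $\phi:S\to T$ with $a\phi=u$, $b\phi=v$ and $(aS\cap bS)\phi=uT\cap vT$. If $S$ is right ideal Howson then so is $T$.
   Context: A semigroup $S$ is right ideal Howson if the intersection of any two finitely generated right ideals of $S$ is finitely generated, where a right ideal $I$ is finitely generated if $I=XS^1$ for finite $X\subseteq I$ ($S^1$ is $S$ if $S$ is a monoid, otherwise $S$ with an identity adjoined). Elements $u,v\in T$ are $\mathcal{R}$-incomparable if $u\notin vT^1$ and $v\notin uT^1$. *)

theory Defs
  imports Main
begin

text \<open>Semigroups are modelled as types of class semigroup_mult.
  For X a subset of S, the right ideal X S^1 equals X \<union> X S.\<close>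

definition right_ideal_gen :: "'a::semigroup_mult set \<Rightarrow> 'a set" where
  "right_ideal_gen X = X \<union> {x * s | x s. x \<in> X}"

definition right_ideal :: "'a::semigroup_mult set \<Rightarrow> bool" where
  "right_ideal I \<longleftrightarrow> (\<forall>x\<in>I. \<forall>s. x * s \<in> I)"

definition fg_right_ideal :: "'a::semigroup_mult set \<Rightarrow> bool" where
  "fg_right_ideal I \<longleftrightarrow> right_ideal I \<and>
     (\<exists>X. finite X \<and> X \<subseteq> I \<and> I = right_ideal_gen X)"

definition right_ideal_Howson :: "'a::semigroup_mult itself \<Rightarrow> bool" where
  "right_ideal_Howson _ \<longleftrightarrow>
     (\<forall>I J :: 'a set. fg_right_ideal I \<and> fg_right_ideal J \<longrightarrow> fg_right_ideal (I \<inter> J))"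

definition R_incomparable :: "'a::semigroup_mult \<Rightarrow> 'a \<Rightarrow> bool" where
  "R_incomparable u v \<longleftrightarrow> u \<notin> right_ideal_gen {v} \<and> v \<notin> right_ideal_gen {u}"

definition sg_hom :: "('a::semigroup_mult \<Rightarrow> 'b::semigroup_mult) \<Rightarrow> bool" where
  "sg_hom f \<longleftrightarrow> (\<forall>x y. f (x * y) = f x * f y)"

end

theory Submission
  imports Defs
begin

lemma ri_gen: "right_ideal (right_ideal_gen X)"
  unfolding right_ideal_def
proof (intro ballI allI)
  fix y s assume "y \<in> right_ideal_gen X"
  then obtain x where x: "x \<in> X" "y = x \<or> (\<exists>t. y = x * t)" unfolding right_ideal_gen_def by blast
  then have "y * s = x * s \<or> (\<exists>t. y * s = x * (t * s))" by (auto simp: mult.assoc)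
  then show "y * s \<in> right_ideal_gen X" using x(1) unfolding right_ideal_gen_def by blast
qed

lemma fg_iff: "fg_right_ideal I \<longleftrightarrow> (\<exists>X. finite X \<and> X \<subseteq> I \<and> I = right_ideal_gen X)"
  unfolding fg_right_ideal_def using ri_gen by blast

lemma gen_sub: "X \<subseteq> right_ideal_gen X"
  unfolding right_ideal_gen_def by auto

lemma gen_Un: "right_ideal_gen (A \<union> B) = right_ideal_gen A \<union> right_ideal_gen B"
  unfolding right_ideal_gen_def by auto

lemma fg_empty: "fg_right_ideal ({}::'a::semigroup_mult set)"
  unfolding fg_iff right_ideal_gen_def by auto

lemma fg_Un: assumes "fg_right_ideal I" "fg_right_ideal J" shows "fg_right_ideal (I \<union> J)"
proof -
  obtain X where X: "finite X" "X \<subseteq> I" "I = right_ideal_gen X" using assms(1) fg_iff by blast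
  obtain Y where Y: "finite Y" "Y \<subseteq> J" "J = right_ideal_gen Y" using assms(2) fg_iff by blast
  show ?thesis unfolding fg_iff
  proof (intro exI conjI)
    show "finite (X \<union> Y)" using X Y by simp
    show "X \<union> Y \<subseteq> I \<union> J" using X Y by blast
    show "I \<union> J = right_ideal_gen (X \<union> Y)" unfolding gen_Un using X(3) Y(3) by simp
  qed
qed

lemma fg_UN: "finite P \<Longrightarrow> (\<forall>p\<in>P. fg_right_ideal (F p)) \<Longrightarrow> fg_right_ideal (\<Union>p\<in>P. F p)"
  by (induction P rule: finite_induct) (auto simp: fg_empty intro: fg_Un)

lemma gen_Int: "right_ideal_gen X \<inter> right_ideal_gen Y
   = (\<Union>p\<in>X \<times> Y. right_ideal_gen {fst p} \<inter> right_ideal_gen {snd p})"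
proof -
  have U: "\<And>X. right_ideal_gen X = (\<Union>x\<in>X. right_ideal_gen {x})"
    unfolding right_ideal_gen_def by blast
  show ?thesis unfolding U[of X] U[of Y] by auto
qed

lemma gen_single_sub: "x \<in> right_ideal_gen {y} \<Longrightarrow> right_ideal_gen {x} \<subseteq> right_ideal_gen {y}"
  unfolding right_ideal_gen_def by (auto simp: mult.assoc)

lemma fg_single: "fg_right_ideal (right_ideal_gen {x})"
  unfolding fg_iff using gen_sub by blast

lemma ri_Int: "right_ideal I \<Longrightarrow> right_ideal J \<Longrightarrow> right_ideal (I \<inter> J)"
  unfolding right_ideal_def by auto

lemma key:
  fixes x y :: "'b::semigroup_mult"
  assumes H: "\<And>u v :: 'b::semigroup_mult. R_incomparable u v \<Longrightarrow>
     \<exists>(a::'a::semigroup_mult) b \<phi>. sg_hom \<phi> \<and> \<phi> a = u \<and> \<phi> b = v \<and>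
        \<phi> ` (range ((*) a) \<inter> range ((*) b)) = range ((*) u) \<inter> range ((*) v)"
    and How: "right_ideal_Howson TYPE('a)"
  shows "fg_right_ideal (right_ideal_gen {x} \<inter> right_ideal_gen {y})"
proof (cases "x \<in> right_ideal_gen {y}")
  case True
  then have "right_ideal_gen {x} \<inter> right_ideal_gen {y} = right_ideal_gen {x}"
    using gen_single_sub by blast
  then show ?thesis using fg_single[of x] by simp
next
  case nx: False
  show ?thesis
  proof (cases "y \<in> right_ideal_gen {x}")
    case True
    then have "right_ideal_gen {x} \<inter> right_ideal_gen {y} = right_ideal_gen {y}"
      using gen_single_sub by blast
    then show ?thesis using fg_single[of y] by simp
  next
    case ny: False
    have inc: "R_incomparable x y" unfolding R_incomparable_def using nx ny by blast
    then obtain a b and \<phi> :: "'a \<Rightarrow> 'b" where ph: "sg_hom \<phi>" "\<phi> a = x" "\<phi> b = y"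
      "\<phi> ` (range ((*) a) \<inter> range ((*) b)) = range ((*) x) \<inter> range ((*) y)"
      using H[OF inc] by (elim exE conjE) blast
    have E1: "right_ideal_gen {x} \<inter> right_ideal_gen {y} = range ((*) x) \<inter> range ((*) y)"
    proof
      show "right_ideal_gen {x} \<inter> right_ideal_gen {y} \<subseteq> range ((*) x) \<inter> range ((*) y)"
      proof
        fix z assume z: "z \<in> right_ideal_gen {x} \<inter> right_ideal_gen {y}"
        have "z \<noteq> x" using z nx by blast
        moreover have "z \<noteq> y" using z ny by blast
        ultimately show "z \<in> range ((*) x) \<inter> range ((*) y)"
          using z unfolding right_ideal_gen_def by auto
      qed
    qed (auto simp: right_ideal_gen_def)
    define K where "K = right_ideal_gen {a} \<inter> right_ideal_gen {b}"
    have "fg_right_ideal K" unfolding K_def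
      using How[unfolded right_ideal_Howson_def, rule_format, OF conjI[OF fg_single[of a] fg_single[of b]]] .
    then obtain Z where Z: "finite Z" "Z \<subseteq> K" "K = right_ideal_gen Z" using fg_iff by blast
    have hom: "\<And>p q. \<phi> (p * q) = \<phi> p * \<phi> q" using ph(1) unfolding sg_hom_def by blast
    have aK: "a \<notin> right_ideal_gen {b}"
    proof
      assume "a \<in> right_ideal_gen {b}"
      then have "a = b \<or> (\<exists>s. a = b * s)" unfolding right_ideal_gen_def by auto
      then have "x = y \<or> (\<exists>s. x = y * \<phi> s)" using ph(2,3) hom by auto
      then show False using nx unfolding right_ideal_gen_def by auto
    qed
    have bK: "b \<notin> right_ideal_gen {a}"
    proof
      assume "b \<in> right_ideal_gen {a}"
      then have "b = a \<or> (\<exists>s. b = a * s)" unfolding right_ideal_gen_def by auto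
      then have "y = x \<or> (\<exists>s. y = x * \<phi> s)" using ph(2,3) hom by auto
      then show False using ny unfolding right_ideal_gen_def by auto
    qed
    have KE: "K = range ((*) a) \<inter> range ((*) b)"
    proof
      show "K \<subseteq> range ((*) a) \<inter> range ((*) b)"
      proof
        fix z assume z: "z \<in> K"
        have "z \<noteq> a" using z aK K_def by blast
        moreover have "z \<noteq> b" using z bK K_def by blast
        ultimately show "z \<in> range ((*) a) \<inter> range ((*) b)"
          using z unfolding K_def right_ideal_gen_def by auto
      qed
    qed (auto simp: K_def right_ideal_gen_def)
    define M where "M = right_ideal_gen {x} \<inter> right_ideal_gen {y}"
    have MK: "M = \<phi> ` K" using E1 KE ph(4) M_def by simp
    have riM: "right_ideal M" unfolding M_def by (intro ri_Int ri_gen)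
    have Mg: "M = right_ideal_gen (\<phi> ` Z)"
    proof
      show "M \<subseteq> right_ideal_gen (\<phi> ` Z)"
      proof
        fix m assume "m \<in> M"
        then obtain k where k: "k \<in> K" "m = \<phi> k" using MK by blast
        then have "k \<in> Z \<or> (\<exists>z s. z \<in> Z \<and> k = z * s)" using Z(3) unfolding right_ideal_gen_def by auto
        then show "m \<in> right_ideal_gen (\<phi> ` Z)"
        proof
          assume "k \<in> Z" then show ?thesis using k(2) gen_sub by blast
        next
          assume "\<exists>z s. z \<in> Z \<and> k = z * s"
          then obtain z s where "z \<in> Z" "k = z * s" by blast
          then have "\<phi> z \<in> \<phi> ` Z" "m = \<phi> z * \<phi> s" using k(2) hom by auto
          then show ?thesis unfolding right_ideal_gen_def by blast
        qed
      qed
    next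
      have PZ: "\<phi> ` Z \<subseteq> M" using MK Z(2) by blast
      show "right_ideal_gen (\<phi> ` Z) \<subseteq> M"
      proof
        fix m assume "m \<in> right_ideal_gen (\<phi> ` Z)"
        then have "m \<in> \<phi> ` Z \<or> (\<exists>z t. z \<in> \<phi> ` Z \<and> m = z * t)" unfolding right_ideal_gen_def by auto
        then show "m \<in> M"
        proof
          assume "m \<in> \<phi> ` Z" then show ?thesis using PZ by blast
        next
          assume "\<exists>z t. z \<in> \<phi> ` Z \<and> m = z * t"
          then obtain z t where "z \<in> \<phi> ` Z" "m = z * t" by blast
          then show ?thesis using PZ riM unfolding right_ideal_def by blast
        qed
      qed
    qed
    have "finite (\<phi> ` Z)" using Z(1) by simp
    moreover have "\<phi> ` Z \<subseteq> M" using MK Z(2) by blast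
    ultimately have "fg_right_ideal M" unfolding fg_iff using Mg by (intro exI[of _ "\<phi> ` Z"]) simp
    then show ?thesis unfolding M_def .
  qed
qed

theorem mainTheorem19:
  assumes "\<And>u v :: 'b::semigroup_mult. R_incomparable u v \<Longrightarrow>
     \<exists>(a::'a::semigroup_mult) b \<phi>. sg_hom \<phi> \<and> \<phi> a = u \<and> \<phi> b = v \<and>
        \<phi> ` (range ((*) a) \<inter> range ((*) b)) = range ((*) u) \<inter> range ((*) v)"
    and "right_ideal_Howson TYPE('a)"
  shows "right_ideal_Howson TYPE('b)"
  unfolding right_ideal_Howson_def
proof (intro allI impI)
  fix I J :: "'b set"
  assume IJ: "fg_right_ideal I \<and> fg_right_ideal J"
  obtain X where X: "finite X" "X \<subseteq> I" "I = right_ideal_gen X"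
    using IJ unfolding fg_iff by (elim conjE exE)
  obtain Y where Y: "finite Y" "Y \<subseteq> J" "J = right_ideal_gen Y"
    using IJ unfolding fg_iff by (elim conjE exE)
  have "fg_right_ideal (\<Union>p\<in>X \<times> Y. right_ideal_gen {fst p} \<inter> right_ideal_gen {snd p})"
  proof (rule fg_UN)
    show "finite (X \<times> Y)" using X(1) Y(1) by simp
    show "\<forall>p\<in>X \<times> Y. fg_right_ideal (right_ideal_gen {fst p} \<inter> right_ideal_gen {snd p})"
      by (intro ballI key[OF assms])
  qed
  moreover have "I \<inter> J = (\<Union>p\<in>X \<times> Y. right_ideal_gen {fst p} \<inter> right_ideal_gen {snd p})"
    using gen_Int[of X Y] X(3) Y(3) by (rule_tac trans[of _ "right_ideal_gen X \<inter> right_ideal_gen Y"]) auto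
  ultimately show "fg_right_ideal (I \<inter> J)" by (rule ssubst[rotated])
qed

end
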